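(* Let $x,y\in S_n$. Any directed path $\gamma$ from $x$ to $y$ in the Bruhat graph $\Gamma$ is contained in at most one hypercube (subgraph of $\Gamma$ isomorphic to some $\mathcal{H}_m$) whose bottom vertex is $x$ and whose top vertex is $y$.
   Context: $S_n$ is the symmetric group with length function $\ell$ (with respect to simple reflections $s_i=(i\ i{+}1)$) and $T$ its set of transpositions. The Bruhat graph $\Gamma$ is the directed graph on $S_n$ with an edge $w\to tw$ whenever $t\in T$ and $\ell(w)<\ell(tw)$. The hypercube graph $\mathcal{H}_m$ is the directed graph given by the Hasse diagram of the Boolean lattice of subsets of an $m$-element set (edges $A\to A\cup\{a\}$); an $m$-hypercube is a subgraph of $\Gamma$ isomorphic to $\mathcal{H}_m$, and its bottom and top vertices are the images of $\varnothing$ and of the full set. *)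

theory Defs
  imports "HOL-Combinatorics.Permutations" "HOL-Combinatorics.Transposition"
begin

definition Sym :: "nat \<Rightarrow> (nat \<Rightarrow> nat) set" where
  "Sym n = {w. w permutes {..<n}}"

definition simple_refl :: "nat \<Rightarrow> nat \<Rightarrow> nat" where
  "simple_refl i = transpose i (Suc i)"

definition len :: "nat \<Rightarrow> (nat \<Rightarrow> nat) \<Rightarrow> nat" where
  "len n w = (LEAST k. \<exists>is. length is = k \<and> (\<forall>i\<in>set is. Suc i < n) \<and>
                 w = foldr (\<lambda>i f. simple_refl i \<circ> f) is id)"

definition Transp :: "nat \<Rightarrow> (nat \<Rightarrow> nat) set" where
  "Transp n = {transpose i j | i j. i < j \<and> j < n}"

definition bruhat_edge :: "nat \<Rightarrow> (nat \<Rightarrow> nat) \<Rightarrow> (nat \<Rightarrow> nat) \<Rightarrow> bool" where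
  "bruhat_edge n w v \<longleftrightarrow> w \<in> Sym n \<and> (\<exists>t\<in>Transp n. v = t \<circ> w) \<and> len n w < len n v"

text \<open>A subgraph (V,E) of the Bruhat graph which is an m-hypercube, i.e. isomorphic
  to the Hasse diagram of the Boolean lattice of subsets of {0..<m}, with bottom x
  (image of the empty set) and top y (image of the full set).\<close>
definition hypercube_from_to ::
  "nat \<Rightarrow> nat \<Rightarrow> (nat \<Rightarrow> nat) set \<Rightarrow> ((nat \<Rightarrow> nat) \<times> (nat \<Rightarrow> nat)) set
     \<Rightarrow> (nat \<Rightarrow> nat) \<Rightarrow> (nat \<Rightarrow> nat) \<Rightarrow> bool" where
  "hypercube_from_to n m V E x y \<longleftrightarrow>
     V \<subseteq> Sym n \<and> E \<subseteq> V \<times> V \<and> (\<forall>(w,v)\<in>E. bruhat_edge n w v) \<and>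
     (\<exists>\<phi>. bij_betw \<phi> (Pow {..<m}) V \<and>
        (\<forall>A\<in>Pow {..<m}. \<forall>B\<in>Pow {..<m}.
            (\<phi> A, \<phi> B) \<in> E \<longleftrightarrow> (\<exists>a\<in>{..<m}. a \<notin> A \<and> B = insert a A)) \<and>
        \<phi> {} = x \<and> \<phi> {..<m} = y)"

definition bruhat_path :: "nat \<Rightarrow> (nat \<Rightarrow> nat) list \<Rightarrow> (nat \<Rightarrow> nat) \<Rightarrow> (nat \<Rightarrow> nat) \<Rightarrow> bool" where
  "bruhat_path n \<gamma> x y \<longleftrightarrow> \<gamma> \<noteq> [] \<and> hd \<gamma> = x \<and> last \<gamma> = y \<and>
     (\<forall>i. Suc i < length \<gamma> \<longrightarrow> bruhat_edge n (\<gamma> ! i) (\<gamma> ! Suc i))"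

definition path_in :: "(nat \<Rightarrow> nat) list \<Rightarrow> (nat \<Rightarrow> nat) set \<Rightarrow> ((nat \<Rightarrow> nat) \<times> (nat \<Rightarrow> nat)) set \<Rightarrow> bool" where
  "path_in \<gamma> V E \<longleftrightarrow> set \<gamma> \<subseteq> V \<and> (\<forall>i. Suc i < length \<gamma> \<longrightarrow> (\<gamma> ! i, \<gamma> ! Suc i) \<in> E)"

end

theory Submission
  imports Defs
begin


definition Inv :: "nat \<Rightarrow> (nat \<Rightarrow> nat) \<Rightarrow> (nat \<times> nat) set" where
  "Inv n f = {(a,b). a < b \<and> b < n \<and> f b < f a}"

lemma Inv_finite: "finite (Inv n f)"
  by (rule finite_subset[of _ "{..<n} \<times> {..<n}"]) (auto simp: Inv_def)

lemma g_inj: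
  fixes s :: "nat \<Rightarrow> nat"
  assumes "\<And>x. s (s x) = x"
  shows "inj_on (\<lambda>(a,b). if s a < s b then (s a, s b) else (a,b)) {(a,b). a < b}"
proof (rule inj_onI, clarsimp)
  fix a b a' b' :: nat
  assume h: "a < b" "a' < b'" "(if s a < s b then (s a, s b) else (a, b)) = (if s a' < s b' then (s a', s b') else (a', b'))"
  show "a = a' \<and> b = b'"
  proof (cases "s a < s b"; cases "s a' < s b'")
    assume "s a < s b" "s a' < s b'" then show ?thesis using h assms by (metis Pair_inject)
  next
    assume "s a < s b" "\<not> s a' < s b'" then show ?thesis using h assms by (metis Pair_inject)
  next
    assume "\<not> s a < s b" "s a' < s b'" then show ?thesis using h assms by (metis Pair_inject)
  next
    assume "\<not> s a < s b" "\<not> s a' < s b'" then show ?thesis using h by auto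
  qed
qed

lemma rev_cases:
  fixes P Q a b :: nat
  assumes "P < Q" "a < b" "\<not> transpose P Q a < transpose P Q b"
  shows "(a = P \<and> b = Q) \<or> (a = P \<and> P < b \<and> b < Q) \<or> (P < a \<and> a < Q \<and> b = Q)"
proof (cases "a = P")
  case True
  show ?thesis
  proof (cases "b = Q")
    case False
    have "b \<noteq> P" using assms True by auto
    then have "transpose P Q b = b" "transpose P Q a = Q" using False True by auto
    then have "b < Q" using assms False by auto
    then show ?thesis using True assms by auto
  qed (use True in auto)
next
  case F: False
  show ?thesis
  proof (cases "a = Q")
    case True then show ?thesis using assms F by (auto simp: transpose_def split: if_splits)
  next
    case False then show ?thesis using assms F by (cases "b = P"; cases "b = Q") (auto simp: transpose_def)
  qed
qed

lemma inv_down: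
  assumes "P < Q" "Q < n" "w Q < w P"
  shows "card (Inv n (w \<circ> transpose P Q)) < card (Inv n w)"
proof -
  let ?s = "transpose P Q"
  define g where "g = (\<lambda>(a,b). if ?s a < ?s b then (?s a, ?s b) else (a::nat,b::nat))"
  have inj: "inj_on g (Inv n (w \<circ> ?s))"
    by (rule inj_on_subset[OF g_inj[of ?s, folded g_def]]) (auto simp: Inv_def)
  have sub: "g ` Inv n (w \<circ> ?s) \<subseteq> Inv n w - {(P,Q)}"
  proof
    fix z assume "z \<in> g ` Inv n (w \<circ> ?s)"
    then obtain a b where ab: "(a,b) \<in> Inv n (w \<circ> ?s)" "z = g (a,b)" by auto
    then have ab2: "a < b" "b < n" "w (?s b) < w (?s a)" by (auto simp: Inv_def)
    show "z \<in> Inv n w - {(P,Q)}"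
    proof (cases "?s a < ?s b")
      case True
      have "?s b < n" using ab2 assms by (auto simp: transpose_def)
      moreover have "(?s a, ?s b) \<noteq> (P,Q)"
      proof
        assume "(?s a, ?s b) = (P,Q)"
        then have "a = Q" "b = P" by (auto simp: transpose_eq_iff)
        then show False using ab2 assms by auto
      qed
      ultimately show ?thesis using True ab2 unfolding ab(2) g_def Inv_def by auto
    next
      case False
      from rev_cases[OF assms(1) ab2(1) False] consider "a = P \<and> b = Q" | "a = P \<and> P < b \<and> b < Q" | "P < a \<and> a < Q \<and> b = Q" by blast
      then show ?thesis
      proof cases
        case 1 then show ?thesis using ab2 assms by auto
      next
        case 2 then have "?s b = b" "?s a = Q" by auto
        then show ?thesis using 2 ab2 assms False unfolding ab(2) g_def Inv_def by auto
      next
        case 3 then have "?s b = P" "?s a = a" by auto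
        then show ?thesis using 3 ab2 assms False unfolding ab(2) g_def Inv_def by auto
      qed
    qed
  qed
  have "card (Inv n (w \<circ> ?s)) = card (g ` Inv n (w \<circ> ?s))" using inj by (simp add: card_image)
  also have "\<dots> \<le> card (Inv n w - {(P,Q)})" by (rule card_mono[OF _ sub]) (simp add: Inv_finite)
  also have "\<dots> < card (Inv n w)"
    using assms by (intro card_Diff1_less Inv_finite) (auto simp: Inv_def)
  finally show ?thesis .
qed

lemma inv_up:
  assumes "P < Q" "Q < n" "w P < w Q" "\<forall>c. P < c \<and> c < Q \<longrightarrow> w c < w P \<or> w Q < w c"
  shows "card (Inv n (w \<circ> transpose P Q)) \<le> card (Inv n w) + 1"
proof -
  let ?s = "transpose P Q"
  define g where "g = (\<lambda>(a,b). if ?s a < ?s b then (?s a, ?s b) else (a::nat,b::nat))"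
  have inj: "inj_on g (Inv n (w \<circ> ?s) - {(P,Q)})"
    by (rule inj_on_subset[OF g_inj[of ?s, folded g_def]]) (auto simp: Inv_def)
  have sub: "g ` (Inv n (w \<circ> ?s) - {(P,Q)}) \<subseteq> Inv n w"
  proof
    fix z assume "z \<in> g ` (Inv n (w \<circ> ?s) - {(P,Q)})"
    then obtain a b where ab: "(a,b) \<in> Inv n (w \<circ> ?s)" "(a,b) \<noteq> (P,Q)" "z = g (a,b)" by auto
    then have ab2: "a < b" "b < n" "w (?s b) < w (?s a)" by (auto simp: Inv_def)
    have h1: "\<And>c. P < c \<Longrightarrow> c < Q \<Longrightarrow> w P < w c \<Longrightarrow> w Q < w c" 
      and h2: "\<And>c. P < c \<Longrightarrow> c < Q \<Longrightarrow> w c < w Q \<Longrightarrow> w c < w P"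
      using assms(4) by (metis less_asym)+
    show "z \<in> Inv n w"
    proof (cases "?s a < ?s b")
      case True
      have "?s b < n" using ab2 assms by (auto simp: transpose_def)
      then show ?thesis using True ab2 unfolding ab(3) g_def Inv_def by auto
    next
      case False
      from rev_cases[OF assms(1) ab2(1) False] consider "a = P \<and> b = Q" | "a = P \<and> P < b \<and> b < Q" | "P < a \<and> a < Q \<and> b = Q" by blast
      then show ?thesis
      proof cases
        case 1 then show ?thesis using ab(2) by auto
      next
        case 2 then have "?s b = b" "?s a = Q" by auto
        then show ?thesis using 2 ab2 h2[of b] False unfolding ab(3) g_def Inv_def by auto
      next
        case 3 then have "?s b = P" "?s a = a" by auto
        then show ?thesis using 3 ab2 h1[of a] False unfolding ab(3) g_def Inv_def by auto
      qed
    qed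
  qed
  have c1: "card (Inv n (w \<circ> ?s)) \<le> card (Inv n (w \<circ> ?s) - {(P,Q)}) + 1"
    by (cases "(P,Q) \<in> Inv n (w \<circ> ?s)") (auto simp: card_Diff_singleton Inv_finite card_gt_0_iff)
  have "card (Inv n (w \<circ> ?s) - {(P,Q)}) = card (g ` (Inv n (w \<circ> ?s) - {(P,Q)}))" using inj by (simp add: card_image)
  also have "\<dots> \<le> card (Inv n w)" by (rule card_mono[OF Inv_finite sub])
  finally show ?thesis using c1 by linarith
qed



abbreviation wd :: "nat list \<Rightarrow> nat \<Rightarrow> nat" where
  "wd is \<equiv> foldr (\<lambda>i f. simple_refl i \<circ> f) is id"

lemma wd_perm: "\<forall>i\<in>set is. Suc i < n \<Longrightarrow> wd is permutes {..<n}"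
  by (induction "is") (auto simp: simple_refl_def permutes_id intro!: permutes_compose permutes_swap_id)

lemma Inv_id: "Inv n id = {}" by (auto simp: Inv_def)
lemma Inv_id2: "Inv n (\<lambda>x. x) = {}" by (auto simp: Inv_def)

lemma perm_comp_eq:
  assumes "f permutes S"
  shows "transpose i j \<circ> f = f \<circ> transpose (inv f i) (inv f j)"
  by (rule transpose_comp_eq) (rule permutes_bij[OF assms])

lemma ninv_step:
  assumes f: "f permutes {..<n}" and i: "Suc i < n"
  shows "card (Inv n (simple_refl i \<circ> f)) \<le> card (Inv n f) + 1"
proof -
  let ?P = "inv f i" and ?Q = "inv f (Suc i)"
  have fP: "f ?P = i" "f ?Q = Suc i" using permutes_inverses(1)[OF f] by auto
  have PQ: "?P < n" "?Q < n" using permutes_in_image[OF permutes_inv[OF f]] i by auto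
  have eq: "simple_refl i \<circ> f = f \<circ> transpose ?P ?Q"
    unfolding simple_refl_def by (rule perm_comp_eq[OF f])
  have ne: "?P \<noteq> ?Q" using fP by auto
  show ?thesis
  proof (cases "?P < ?Q")
    case True
    have "\<forall>c. ?P < c \<and> c < ?Q \<longrightarrow> f c < f ?P \<or> f ?Q < f c"
    proof (intro allI impI)
      fix c assume c: "?P < c \<and> c < ?Q"
      then have "f c \<noteq> i" "f c \<noteq> Suc i" using fP permutes_inj[OF f] by (metis injD less_irrefl)+
      then show "f c < f ?P \<or> f ?Q < f c" using fP by auto
    qed
    then show ?thesis unfolding eq using inv_up[of ?P ?Q n f] True PQ fP by auto
  next
    case False
    then have lt: "?Q < ?P" using ne by auto
    have "transpose ?P ?Q = transpose ?Q ?P" by (rule transpose_commute)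
    then show ?thesis unfolding eq using inv_down[of ?Q ?P n f] lt PQ fP by auto
  qed
qed

lemma ninv_word: "\<forall>i\<in>set is. Suc i < n \<Longrightarrow> card (Inv n (wd is)) \<le> length is"
proof (induction "is")
  case Nil then show ?case by (simp add: Inv_id2)
next
  case (Cons i "is")
  then have h: "card (Inv n (simple_refl i \<circ> wd is)) \<le> card (Inv n (wd is)) + 1"
    by (intro ninv_step wd_perm) auto
  have e: "wd (i # is) = simple_refl i \<circ> wd is" by simp
  have "\<forall>i\<in>set is. Suc i < n" using Cons.prems by simp
  then have "card (Inv n (wd is)) \<le> length is" by (rule Cons.IH)
  then show ?case unfolding e using h by (simp del: o_apply comp_apply add: o_def[symmetric])
qed

lemma mono_perm_id:
  assumes g: "g permutes {..<n}" and m: "\<forall>i. Suc i < n \<longrightarrow> g i < g (Suc i)"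
  shows "g = id"
proof -
  have sm: "g a < g b" if "a < b" "b < n" for a b
    using that
  proof (induction b)
    case 0 then show ?case by simp
  next
    case (Suc b)
    then show ?case using m by (cases "a = b") (auto intro: less_trans)
  qed
  have "g k = k" if "k < n" for k
    using that
  proof (induction k rule: less_induct)
    case (less k)
    obtain m where mm: "m < n" "g m = k"
      using permutes_surj[OF g] less.prems permutes_in_image[OF g] by (metis lessThan_iff surjD)
    have "m = k"
    proof (rule ccontr)
      assume "m \<noteq> k"
      then consider "m < k" | "k < m" by linarith
      then show False
      proof cases
        case 1 then show False using less.IH[of m] mm by auto
      next
        case 2
        have "g k \<ge> k"
        proof (rule ccontr)
          assume "\<not> g k \<ge> k"
          then have "g (g k) = g k" using less.IH[of "g k"] less.prems by auto
          then have "g k = k" using permutes_inj[OF g] by (auto dest: injD)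
          then show False using \<open>\<not> g k \<ge> k\<close> by auto
        qed
        moreover have "g k < g m" using sm[OF 2 mm(1)] .
        ultimately show False using mm by auto
      qed
    qed
    then show ?case using mm by simp
  qed
  then show ?thesis using permutes_not_in[OF g] by (auto simp: fun_eq_iff)
qed

lemma descent:
  assumes f: "f permutes {..<n}" and ne: "f \<noteq> id"
  shows "\<exists>i. Suc i < n \<and> inv f (Suc i) < inv f i"
proof (rule ccontr)
  assume "\<not> ?thesis"
  then have "\<forall>i. Suc i < n \<longrightarrow> inv f i < inv f (Suc i)"
    using permutes_inj[OF permutes_inv[OF f]] by (metis injD linorder_neqE_nat n_not_Suc_n)
  then have "inv f = id" by (rule mono_perm_id[OF permutes_inv[OF f]])
  then have "f = id" using permutes_inv_inv[OF f] by (metis inv_id)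
  then show False using ne by simp
qed

lemma word_exists:
  "f permutes {..<n} \<Longrightarrow> \<exists>is. length is = card (Inv n f) \<and> (\<forall>i\<in>set is. Suc i < n) \<and> f = wd is"
proof (induction "card (Inv n f)" arbitrary: f rule: less_induct)
  case less
  note f = less.prems
  show ?case
  proof (cases "f = id")
    case True then show ?thesis by (intro exI[of _ "[]"]) (simp add: Inv_id)
  next
    case False
    obtain i where i: "Suc i < n" "inv f (Suc i) < inv f i" using descent[OF f False] by blast
    let ?P = "inv f (Suc i)" and ?Q = "inv f i"
    let ?g = "simple_refl i \<circ> f"
    have f': "?g permutes {..<n}" unfolding simple_refl_def
      using i by (intro permutes_compose[OF f] permutes_swap_id) auto
    have fP: "f ?P = Suc i" "f ?Q = i" using permutes_inverses(1)[OF f] by auto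
    have PQ: "?P < n" "?Q < n" using permutes_in_image[OF permutes_inv[OF f]] i by auto
    have eq: "?g = f \<circ> transpose ?P ?Q"
      unfolding simple_refl_def by (subst transpose_commute) (rule perm_comp_eq[OF f])
    have lt: "card (Inv n ?g) < card (Inv n f)"
      unfolding eq using inv_down[of ?P ?Q n f] i PQ fP by auto
    have hback: "f = simple_refl i \<circ> ?g" by (simp add: simple_refl_def comp_assoc[symmetric])
    have le: "card (Inv n f) \<le> card (Inv n ?g) + 1"
      using ninv_step[OF f' i(1)] hback by simp
    obtain is' where is': "length is' = card (Inv n ?g)" "\<forall>i\<in>set is'. Suc i < n" "?g = wd is'"
      using less.hyps[OF lt f'] by blast
    show ?thesis
      using is' i lt le hback by (intro exI[of _ "i # is'"]) auto
  qed
qed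

lemma len_eq:
  assumes "f \<in> Sym n"
  shows "len n f = card (Inv n f)"
proof -
  have f: "f permutes {..<n}" using assms by (simp add: Sym_def)
  obtain is0 where is0: "length is0 = card (Inv n f)" "\<forall>i\<in>set is0. Suc i < n" "f = wd is0"
    using word_exists[OF f] by blast
  show ?thesis unfolding len_def
  proof (rule Least_equality)
    show "\<exists>is. length is = card (Inv n f) \<and> (\<forall>i\<in>set is. Suc i < n) \<and> f = wd is"
      using is0 by blast
  next
    fix k assume "\<exists>is. length is = k \<and> (\<forall>i\<in>set is. Suc i < n) \<and> f = wd is"
    then obtain "is" where "length is = k" "\<forall>i\<in>set is. Suc i < n" "f = wd is" by blast
    then show "card (Inv n f) \<le> k" using ninv_word by metis
  qed
qed

lemma edge_order:
  assumes f: "f \<in> Sym n" and ij: "i < j" "j < n"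
    and up: "len n f < len n (transpose i j \<circ> f)"
  shows "inv f i < inv f j"
proof (rule ccontr)
  have fp: "f permutes {..<n}" using f by (simp add: Sym_def)
  assume "\<not> inv f i < inv f j"
  moreover have "inv f i \<noteq> inv f j" by (metis ij(1) less_irrefl permutes_inverses(1)[OF fp])
  ultimately have lt: "inv f j < inv f i" by auto
  let ?P = "inv f j" and ?Q = "inv f i"
  have fP: "f ?P = j" "f ?Q = i" using permutes_inverses(1)[OF fp] by auto
  have PQ: "?P < n" "?Q < n" using permutes_in_image[OF permutes_inv[OF fp]] ij by auto
  have eq: "transpose i j \<circ> f = f \<circ> transpose ?P ?Q"
    by (subst transpose_commute) (rule perm_comp_eq[OF fp])
  have tf: "transpose i j \<circ> f \<in> Sym n" using fp ij unfolding Sym_def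
    by (auto intro!: permutes_compose permutes_swap_id)
  have "card (Inv n (transpose i j \<circ> f)) < card (Inv n f)"
    unfolding eq using inv_down[of ?P ?Q n f] lt PQ fP ij by auto
  then show False using up len_eq[OF f] len_eq[OF tf] by simp
qed



lemma moved:
  fixes a b e f :: nat
  assumes "a < b" "e < f" "(e,f) \<noteq> (a,b)"
  shows "{z. (transpose e f \<circ> transpose a b) z \<noteq> z} = {a,b,e,f}"
  using assms by (auto simp: transpose_def split: if_splits)

lemma three_pts:
  fixes a b e f :: nat
  assumes "a < b" "e < f" "(e,f) \<noteq> (a,b)" "\<not> (a \<noteq> e \<and> a \<noteq> f \<and> b \<noteq> e \<and> b \<noteq> f)"
  shows "\<exists>p q r. p < q \<and> q < r \<and> {a,b,e,f} = {p,q,r}"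
proof -
  consider "a = e" | "a = f" | "b = e" | "b = f" using assms(4) by blast
  then show ?thesis
  proof cases
    case 1
    then have "b \<noteq> f" using assms by auto
    then consider "b < f" | "f < b" by linarith
    then show ?thesis
    proof cases
      case 1 then show ?thesis using \<open>a = e\<close> assms by (intro exI[of _ a] exI[of _ b] exI[of _ f]) auto
    next
      case 2 then show ?thesis using \<open>a = e\<close> assms by (intro exI[of _ a] exI[of _ f] exI[of _ b]) auto
    qed
  next
    case 2 then show ?thesis using assms by (intro exI[of _ e] exI[of _ a] exI[of _ b]) auto
  next
    case 3 then show ?thesis using assms by (intro exI[of _ a] exI[of _ b] exI[of _ f]) auto
  next
    case 4
    then have "a \<noteq> e" using assms by auto
    then consider "a < e" | "e < a" by linarith
    then show ?thesis
    proof cases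
      case 1 then show ?thesis using \<open>b = f\<close> assms by (intro exI[of _ a] exI[of _ e] exI[of _ b]) auto
    next
      case 2 then show ?thesis using \<open>b = f\<close> assms by (intro exI[of _ e] exI[of _ a] exI[of _ b]) auto
    qed
  qed
qed


lemma pair3:
  fixes x y p q r :: nat
  shows "x \<in> {p,q,r} \<Longrightarrow> y \<in> {p,q,r} \<Longrightarrow> x < y \<Longrightarrow> p < q \<Longrightarrow> q < r \<Longrightarrow> (x,y) \<in> {(p,q),(p,r),(q,r)}"
  by auto

lemma pigeon3: "x0 \<in> {A,B,C} \<Longrightarrow> x1 \<in> {A,B,C} \<Longrightarrow> x2 \<in> {A,B,C} \<Longrightarrow> x0 \<noteq> x1 \<Longrightarrow> x0 \<noteq> x2 \<Longrightarrow> x1 \<noteq> x2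
  \<Longrightarrow> X \<in> {A,B,C} \<Longrightarrow> x0 \<noteq> X \<Longrightarrow> x1 \<noteq> X \<Longrightarrow> x2 \<noteq> X \<Longrightarrow> False"
  by auto

lemma three_middles:
  fixes a b e f c pos :: "nat \<Rightarrow> nat"
  assumes ord: "\<And>k. k < 3 \<Longrightarrow> a k < b k \<and> e k < f k"
    and cdef: "\<And>k. k < 3 \<Longrightarrow> transpose (e k) (f k) \<circ> transpose (a k) (b k) = c"
    and ne: "\<And>k. k < 3 \<Longrightarrow> (e k, f k) \<noteq> (a k, b k)"
    and dist: "\<And>k k'. k < 3 \<Longrightarrow> k' < 3 \<Longrightarrow> k \<noteq> k' \<Longrightarrow> (a k, b k) \<noteq> (a k', b k')"
    and up1: "\<And>k. k < 3 \<Longrightarrow> pos (a k) < pos (b k)"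
    and up2: "\<And>k. k < 3 \<Longrightarrow> pos (transpose (a k) (b k) (e k)) < pos (transpose (a k) (b k) (f k))"
  shows False
proof -
  define M where "M = {z. c z \<noteq> z}"
  have Mk: "M = {a k, b k, e k, f k}" if "k < 3" for k
    using moved[of "a k" "b k" "e k" "f k"] ord[OF that] ne[OF that] cdef[OF that] unfolding M_def by simp
  show False
  proof (cases "a 0 \<noteq> e 0 \<and> a 0 \<noteq> f 0 \<and> b 0 \<noteq> e 0 \<and> b 0 \<noteq> f 0")
    case True
    have c4: "card M = 4" using Mk[of 0] True ord[of 0] by auto
    have distk: "a k \<noteq> e k \<and> a k \<noteq> f k \<and> b k \<noteq> e k \<and> b k \<noteq> f k" if kk: "k < 3" for k
    proof (rule ccontr)
      assume "\<not> ?thesis"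
      then obtain p q r where "{a k, b k, e k, f k} = {p,q,r}"
        using three_pts[of "a k" "b k" "e k" "f k"] ord[OF kk] ne[OF kk] by blast
      moreover have "card {p,q,r} \<le> 3" by (simp add: card_insert_if)
      ultimately have "card M \<le> 3" using Mk[OF kk] by simp
      then show False using c4 by simp
    qed
    have ca: "c (a k) = b k" if "k < 3" for k
      using cdef[OF that, symmetric] distk[OF that] ord[OF that] by auto
    have ce: "c (e 0) = f 0" "c (b 0) = a 0" "c (f 0) = e 0"
      using cdef[of 0, symmetric] distk[of 0] ord[of 0] by auto
    have opt: "(a k, b k) = (a 0, b 0) \<or> (a k, b k) = (e 0, f 0)" if "k < 3" for k
    proof -
      have "a k \<in> M" using Mk[OF that] by auto
      then have "a k \<in> {a 0, b 0, e 0, f 0}" using Mk[of 0] by simp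
      then show ?thesis using ca[OF that] ca[of 0] ce ord[OF that] ord[of 0] by auto
    qed
    show False using opt[of 1] opt[of 2] dist[of 1 0] dist[of 2 0] dist[of 1 2] by auto
  next
    case False
    then obtain p q r where pqr: "p < q" "q < r" "M = {p,q,r}"
      using three_pts[of "a 0" "b 0" "e 0" "f 0"] ord[of 0] ne[of 0] Mk[of 0] by auto
    have inS: "(a k, b k) \<in> {(p,q),(p,r),(q,r)} \<and> (e k, f k) \<in> {(p,q),(p,r),(q,r)}" if "k < 3" for k
    proof -
      have "{a k, b k, e k, f k} = {p,q,r}" using Mk[OF that] pqr by simp
      then have "a k \<in> {p,q,r}" "b k \<in> {p,q,r}" "e k \<in> {p,q,r}" "f k \<in> {p,q,r}" by blast+
      then show ?thesis using pair3[of "a k" p q r "b k"] pair3[of "e k" p q r "f k"] ord[OF that] pqr by blast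
    qed
    have ex: "\<exists>k<3. (a k, b k) = X" if "X \<in> {(p,q),(p,r),(q,r)}" for X
    proof (rule ccontr)
      assume "\<not> ?thesis"
      then have "(a 0, b 0) \<noteq> X" "(a 1, b 1) \<noteq> X" "(a 2, b 2) \<noteq> X" by auto
      moreover have "(a 0, b 0) \<in> {(p,q),(p,r),(q,r)}" "(a 1, b 1) \<in> {(p,q),(p,r),(q,r)}" "(a 2, b 2) \<in> {(p,q),(p,r),(q,r)}"
        using inS[of 0] inS[of 1] inS[of 2] by auto
      moreover have "(a 0, b 0) \<noteq> (a 1, b 1)" "(a 0, b 0) \<noteq> (a 2, b 2)" "(a 1, b 1) \<noteq> (a 2, b 2)"
        using dist[of 0 1] dist[of 0 2] dist[of 1 2] by auto
      ultimately show False using that pigeon3 by metis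
    qed
    obtain k0 where k0: "k0 < 3" "(a k0, b k0) = (p,q)" using ex[of "(p,q)"] by auto
    obtain k1 where k1: "k1 < 3" "(a k1, b k1) = (p,r)" using ex[of "(p,r)"] by auto
    obtain k2 where k2: "k2 < 3" "(a k2, b k2) = (q,r)" using ex[of "(q,r)"] by auto
    have "pos p < pos q" "pos q < pos r" using up1[OF k0(1)] up1[OF k2(1)] k0 k2 by auto
    moreover have "(e k1, f k1) = (p,q) \<or> (e k1, f k1) = (q,r)" using inS[OF k1(1)] ne[OF k1(1)] k1(2) by auto
    moreover have "transpose p r p = r" "transpose p r r = p" "transpose p r q = q" using pqr by auto
    ultimately show False using up2[OF k1(1)] k1(2) by auto
  qed
qed



lemma edge_dest:
  assumes "bruhat_edge n w v"
  shows "w \<in> Sym n" "\<exists>i j. i < j \<and> j < n \<and> v = transpose i j \<circ> w" "len n w < len n v"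
  using assms unfolding bruhat_edge_def Transp_def by blast+

lemma edge_Sym: "bruhat_edge n w v \<Longrightarrow> v \<in> Sym n"
  unfolding bruhat_edge_def Transp_def Sym_def by (auto intro!: permutes_compose permutes_swap_id)

lemma square:
  assumes "bruhat_edge n w v" "bruhat_edge n v u" "bruhat_edge n w v1" "bruhat_edge n v1 u"
    "bruhat_edge n w v2" "bruhat_edge n v2 u" "v1 \<noteq> v" "v2 \<noteq> v"
  shows "v1 = v2"
proof (rule ccontr)
  assume "v1 \<noteq> v2"
  define V where "V = (\<lambda>k::nat. if k = 0 then v else if k = 1 then v1 else v2)"
  have e1: "bruhat_edge n w (V k)" and e2: "bruhat_edge n (V k) u" if "k < 3" for k
    using assms that unfolding V_def by auto
  have Vd: "V k \<noteq> V k'" if "k < 3" "k' < 3" "k \<noteq> k'" for k k'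
    using assms \<open>v1 \<noteq> v2\<close> that unfolding V_def by (auto simp: less_Suc_eq numeral_3_eq_3)
  have "\<forall>k. \<exists>ab. k < 3 \<longrightarrow> fst ab < snd ab \<and> snd ab < n \<and> V k = transpose (fst ab) (snd ab) \<circ> w"
    using edge_dest(2)[OF e1] by fastforce
  then obtain AB where AB: "\<And>k. k < 3 \<Longrightarrow> fst (AB k) < snd (AB k) \<and> snd (AB k) < n \<and> V k = transpose (fst (AB k)) (snd (AB k)) \<circ> w"
    by (metis choice)
  have "\<forall>k. \<exists>ef. k < 3 \<longrightarrow> fst ef < snd ef \<and> snd ef < n \<and> u = transpose (fst ef) (snd ef) \<circ> V k"
    using edge_dest(2)[OF e2] by fastforce
  then obtain EF where EF: "\<And>k. k < 3 \<Longrightarrow> fst (EF k) < snd (EF k) \<and> snd (EF k) < n \<and> u = transpose (fst (EF k)) (snd (EF k)) \<circ> V k"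
    by (metis choice)
  define a where "a = (\<lambda>k. fst (AB k))"
  define b where "b = (\<lambda>k. snd (AB k))"
  define e where "e = (\<lambda>k. fst (EF k))"
  define f where "f = (\<lambda>k. snd (EF k))"
  have wS: "w \<in> Sym n" using edge_dest(1)[OF assms(1)] .
  then have wp: "w permutes {..<n}" by (simp add: Sym_def)
  have Vk: "V k = transpose (a k) (b k) \<circ> w" "a k < b k" "b k < n" if "k < 3" for k
    using AB[OF that] unfolding a_def b_def by auto
  have uk: "u = transpose (e k) (f k) \<circ> V k" "e k < f k" "f k < n" if "k < 3" for k
    using EF[OF that] unfolding e_def f_def by auto
  show False
  proof (rule three_middles[of a b e f "u \<circ> inv w" "inv w"])
    fix k :: nat assume k: "k < 3"
    show "a k < b k \<and> e k < f k" using Vk[OF k] uk[OF k] by simp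
    show "transpose (e k) (f k) \<circ> transpose (a k) (b k) = u \<circ> inv w"
      using uk(1)[OF k] Vk(1)[OF k] permutes_inv_o(1)[OF wp] by (simp add: comp_assoc)
    show "(e k, f k) \<noteq> (a k, b k)"
    proof
      assume "(e k, f k) = (a k, b k)"
      then have "u = w" using uk(1)[OF k] Vk(1)[OF k] by (simp add: comp_assoc[symmetric])
      then show False using edge_dest(3)[OF e1[OF k]] edge_dest(3)[OF e2[OF k]] by simp
    qed
    show "inv w (a k) < inv w (b k)"
      using edge_order[OF wS Vk(2,3)[OF k]] edge_dest(3)[OF e1[OF k]] Vk(1)[OF k] by simp
    have VS: "V k \<in> Sym n" using edge_Sym[OF e1[OF k]] .
    have "inv (V k) (e k) < inv (V k) (f k)"
      using edge_order[OF VS uk(2,3)[OF k]] edge_dest(3)[OF e2[OF k]] uk(1)[OF k] by simp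
    moreover have "inv (V k) = inv w \<circ> transpose (a k) (b k)"
      unfolding Vk(1)[OF k] by (simp add: o_inv_distrib permutes_bij[OF wp])
    ultimately show "inv w (transpose (a k) (b k) (e k)) < inv w (transpose (a k) (b k) (f k))" by simp
  next
    fix k k' :: nat assume kk: "k < 3" "k' < 3" "k \<noteq> k'"
    show "(a k, b k) \<noteq> (a k', b k')"
    proof
      assume "(a k, b k) = (a k', b k')"
      then have "V k = V k'" using Vk(1)[OF kk(1)] Vk(1)[OF kk(2)] by simp
      then show False using Vd[OF kk] by simp
    qed
  qed
qed



definition cube :: "nat \<Rightarrow> nat \<Rightarrow> (nat \<Rightarrow> nat) set \<Rightarrow> ((nat \<Rightarrow> nat) \<times> (nat \<Rightarrow> nat)) set \<Rightarrow> (nat set \<Rightarrow> (nat \<Rightarrow> nat)) \<Rightarrow> bool" where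
  "cube n m V E \<psi> \<longleftrightarrow> bij_betw \<psi> (Pow {..<m}) V \<and>
     (\<forall>A\<in>Pow {..<m}. \<forall>B\<in>Pow {..<m}. (\<psi> A, \<psi> B) \<in> E \<longleftrightarrow> (\<exists>a\<in>{..<m}. a \<notin> A \<and> B = insert a A)) \<and>
     E \<subseteq> V \<times> V \<and> (\<forall>(w,v)\<in>E. bruhat_edge n w v)"

lemma cube_edge:
  assumes "cube n m V E \<psi>" "A \<subseteq> {..<m}" "a < m" "a \<notin> A"
  shows "bruhat_edge n (\<psi> A) (\<psi> (insert a A))"
proof -
  have iff: "\<forall>A\<in>Pow {..<m}. \<forall>B\<in>Pow {..<m}. (\<psi> A, \<psi> B) \<in> E \<longleftrightarrow> (\<exists>a\<in>{..<m}. a \<notin> A \<and> B = insert a A)"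
    and ed: "\<forall>(w,v)\<in>E. bruhat_edge n w v" using assms(1) unfolding cube_def by auto
  have "insert a A \<in> Pow {..<m}" "A \<in> Pow {..<m}" using assms by auto
  then have "(\<psi> A, \<psi> (insert a A)) \<in> E" using iff assms(3,4) by blast
  then show ?thesis using ed by blast
qed

lemma cube_inj:
  assumes "cube n m V E \<psi>" "A \<subseteq> {..<m}" "B \<subseteq> {..<m}" "\<psi> A = \<psi> B"
  shows "A = B"
proof -
  have "inj_on \<psi> (Pow {..<m})" using assms(1) unfolding cube_def bij_betw_def by auto
  then show ?thesis using assms(2-4) by (auto dest: inj_onD)
qed

lemma remap:
  assumes c: "cube n m V E \<phi>" and p: "bij_betw \<pi> {..<m} {..<m}"
  shows "cube n m V E (\<lambda>S. \<phi> (\<pi> ` S))"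
proof -
  have bp: "bij_betw (image \<pi>) (Pow {..<m}) (Pow {..<m})" by (rule bij_betw_image_Pow[OF p])
  have b: "bij_betw (\<lambda>S. \<phi> (\<pi> ` S)) (Pow {..<m}) V"
  proof -
    have "bij_betw \<phi> (Pow {..<m}) V" using c unfolding cube_def by auto
    then show ?thesis using bij_betw_trans[OF bp] by (simp add: comp_def)
  qed
  have inj: "inj_on \<pi> {..<m}" and im: "\<pi> ` {..<m} = {..<m}" using p by (auto simp: bij_betw_def)
  have e: "(\<exists>a\<in>{..<m}. a \<notin> \<pi> ` A \<and> \<pi> ` B = insert a (\<pi> ` A)) \<longleftrightarrow> (\<exists>a\<in>{..<m}. a \<notin> A \<and> B = insert a A)"
    if A: "A \<subseteq> {..<m}" and B: "B \<subseteq> {..<m}" for A B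
  proof
    assume "\<exists>a\<in>{..<m}. a \<notin> \<pi> ` A \<and> \<pi> ` B = insert a (\<pi> ` A)"
    then obtain a where a: "a < m" "a \<notin> \<pi> ` A" "\<pi> ` B = insert a (\<pi> ` A)" by auto
    obtain a' where a': "a' < m" "a = \<pi> a'" using a(1) im by (metis imageE lessThan_iff)
    have "\<pi> ` B = \<pi> ` (insert a' A)" using a a' by simp
    moreover have ins: "insert a' A \<subseteq> {..<m}" using A a'(1) by auto
    ultimately have "B = insert a' A" using inj_on_image_eq_iff[OF inj B ins] by blast
    then show "\<exists>a\<in>{..<m}. a \<notin> A \<and> B = insert a A" using a a' by auto
  next
    assume "\<exists>a\<in>{..<m}. a \<notin> A \<and> B = insert a A"
    then obtain a where a: "a < m" "a \<notin> A" "B = insert a A" by auto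
    have "\<pi> a \<notin> \<pi> ` A" using a A inj by (auto simp: inj_on_def)
    moreover have "\<pi> a < m" using a(1) im by auto
    ultimately show "\<exists>a\<in>{..<m}. a \<notin> \<pi> ` A \<and> \<pi> ` B = insert a (\<pi> ` A)" using a by auto
  qed
  have sub: "\<pi> ` A \<subseteq> {..<m}" if "A \<subseteq> {..<m}" for A using that im by auto
  have iff: "\<forall>A\<in>Pow {..<m}. \<forall>B\<in>Pow {..<m}. (\<phi> A, \<phi> B) \<in> E \<longleftrightarrow> (\<exists>a\<in>{..<m}. a \<notin> A \<and> B = insert a A)"
    using c unfolding cube_def by auto
  have "(\<phi> (\<pi> ` A), \<phi> (\<pi> ` B)) \<in> E \<longleftrightarrow> (\<exists>a\<in>{..<m}. a \<notin> A \<and> B = insert a A)"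
    if "A \<in> Pow {..<m}" "B \<in> Pow {..<m}" for A B
  proof -
    have "\<pi> ` A \<in> Pow {..<m}" "\<pi> ` B \<in> Pow {..<m}" using sub that by auto
    then have "(\<phi> (\<pi> ` A), \<phi> (\<pi> ` B)) \<in> E \<longleftrightarrow> (\<exists>a\<in>{..<m}. a \<notin> \<pi> ` A \<and> \<pi> ` B = insert a (\<pi> ` A))"
      by (rule iff[rule_format])
    also have "\<dots> \<longleftrightarrow> (\<exists>a\<in>{..<m}. a \<notin> A \<and> B = insert a A)" using e that by auto
    finally show ?thesis .
  qed
  note hh = this
  have cE: "E \<subseteq> V \<times> V" "\<forall>(w,v)\<in>E. bruhat_edge n w v" using c unfolding cube_def by auto
  show ?thesis unfolding cube_def
  proof (intro conjI)
    show "\<forall>A\<in>Pow {..<m}. \<forall>B\<in>Pow {..<m}. ((\<phi> (\<pi> ` A), \<phi> (\<pi> ` B)) \<in> E) = (\<exists>a\<in>{..<m}. a \<notin> A \<and> B = insert a A)"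
      using hh by blast
  qed (use b cE in auto)
qed

lemma E_char:
  assumes c: "cube n m V E \<psi>"
  shows "E = {(\<psi> A, \<psi> B) | A B. A \<subseteq> {..<m} \<and> B \<subseteq> {..<m} \<and> (\<exists>a\<in>{..<m}. a \<notin> A \<and> B = insert a A)}" (is "E = ?R")
proof -
  have V: "V = \<psi> ` Pow {..<m}" using c unfolding cube_def bij_betw_def by auto
  have iff: "\<forall>A\<in>Pow {..<m}. \<forall>B\<in>Pow {..<m}. (\<psi> A, \<psi> B) \<in> E \<longleftrightarrow> (\<exists>a\<in>{..<m}. a \<notin> A \<and> B = insert a A)"
    and EV: "E \<subseteq> V \<times> V" using c unfolding cube_def by auto
  show ?thesis
  proof
    show "E \<subseteq> ?R"
    proof
      fix z assume z: "z \<in> E"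
      then obtain p q where pq: "z = (p,q)" "p \<in> V" "q \<in> V" using EV by blast
      then obtain A B where AB: "A \<subseteq> {..<m}" "B \<subseteq> {..<m}" "p = \<psi> A" "q = \<psi> B" using V by auto
      have "\<exists>a\<in>{..<m}. a \<notin> A \<and> B = insert a A" using iff[rule_format, of A B] AB z pq by auto
      then show "z \<in> ?R" using AB pq by blast
    qed
  next
    show "?R \<subseteq> E"
    proof
      fix z assume "z \<in> ?R"
      then obtain A B where AB: "z = (\<psi> A, \<psi> B)" "A \<subseteq> {..<m}" "B \<subseteq> {..<m}" "\<exists>a\<in>{..<m}. a \<notin> A \<and> B = insert a A" by blast
      then show "z \<in> E" using iff[rule_format, of A B] by auto
    qed
  qed
qed

definition Dset :: "nat \<Rightarrow> nat set \<Rightarrow> (nat \<times> nat) set" where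
  "Dset m S = {(s,c). s \<in> S \<and> c \<in> {..<m} - S \<and> c < s}"

lemma Dset_finite: "S \<subseteq> {..<m} \<Longrightarrow> finite (Dset m S)"
  by (rule finite_subset[of _ "{..<m} \<times> {..<m}"]) (auto simp: Dset_def)

lemma Dset_empty:
  assumes "S \<subseteq> {..<m}" "Dset m S = {}"
  shows "\<exists>k\<le>m. S = {..<k}"
proof (cases "S = {}")
  case True then show ?thesis by (intro exI[of _ 0]) auto
next
  case False
  have fin: "finite S" using assms(1) finite_subset by blast
  let ?M = "Max S"
  have MS: "?M \<in> S" using Max_in[OF fin False] .
  have Mm: "?M < m" using MS assms(1) by auto
  have "S = {..<Suc ?M}"
  proof
    show "S \<subseteq> {..<Suc ?M}" using Max_ge[OF fin] by (auto simp: less_Suc_eq_le)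
  next
    show "{..<Suc ?M} \<subseteq> S"
    proof
      fix c assume "c \<in> {..<Suc ?M}"
      then have "c \<le> ?M" by auto
      show "c \<in> S"
      proof (rule ccontr)
        assume "c \<notin> S"
        then have "c < ?M" using \<open>c \<le> ?M\<close> MS le_neq_implies_less by blast
        then have "(?M, c) \<in> Dset m S" using MS Mm \<open>c \<notin> S\<close> by (auto simp: Dset_def)
        then show False using assms(2) by simp
      qed
    qed
  qed
  then show ?thesis using Mm by (intro exI[of _ "Suc ?M"]) auto
qed

lemma unique:
  assumes c1: "cube n m V1 E1 \<psi>1" and c2: "cube n m V2 E2 \<psi>2"
    and init: "\<And>k. k \<le> m \<Longrightarrow> \<psi>1 {..<k} = \<psi>2 {..<k}"
  shows "S \<subseteq> {..<m} \<Longrightarrow> \<psi>1 S = \<psi>2 S"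
proof (induction "card (Dset m S)" arbitrary: S rule: less_induct)
  case less
  note S = less.prems
  show ?case
  proof (cases "Dset m S = {}")
    case True
    then obtain k where "k \<le> m" "S = {..<k}" using Dset_empty[OF S] by blast
    then show ?thesis using init by simp
  next
    case False
    then obtain s0 c0 where sc: "s0 \<in> S" "c0 < m" "c0 \<notin> S" "c0 < s0" by (auto simp: Dset_def)
    have fin: "finite S" using S finite_subset by blast
    define b where "b = Max S"
    define a where "a = Min ({..<m} - S)"
    have bS: "b \<in> S" using Max_in[OF fin] sc(1) unfolding b_def by blast
    have bmax: "\<And>x. x \<in> S \<Longrightarrow> x \<le> b" using Max_ge[OF fin] unfolding b_def by blast
    have aC: "a < m" "a \<notin> S" using Min_in[of "{..<m} - S"] sc(2,3) unfolding a_def by auto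
    have amin: "\<And>x. x < m \<Longrightarrow> x \<notin> S \<Longrightarrow> a \<le> x" using Min_le[of "{..<m} - S"] unfolding a_def by auto
    have ab: "a < b" using amin[OF sc(2,3)] sc(4) bmax[OF sc(1)] by linarith
    have bm: "b < m" using bS S by auto
    define T where "T = S - {b}"
    have ST: "S = insert b T" "b \<notin> T" using bS unfolding T_def by auto
    have baD: "(b, a) \<in> Dset m S" using bS aC ab by (auto simp: Dset_def)
    have D1: "Dset m T \<subset> Dset m S"
    proof
      show "Dset m T \<subseteq> Dset m S"
      proof
        fix z assume "z \<in> Dset m T"
        then obtain s c where z: "z = (s,c)" "s \<in> T" "c < m" "c \<notin> T" "c < s" by (auto simp: Dset_def)
        have "c \<noteq> b" using z bmax[of s] unfolding T_def by auto
        then show "z \<in> Dset m S" using z unfolding T_def Dset_def by auto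
      qed
      have "(b,a) \<notin> Dset m T" using ST by (simp add: Dset_def)
      then show "Dset m T \<noteq> Dset m S" using baD by blast
    qed
    have D2: "Dset m (insert a S) \<subset> Dset m S"
    proof
      show "Dset m (insert a S) \<subseteq> Dset m S"
      proof
        fix z assume "z \<in> Dset m (insert a S)"
        then obtain s c where z: "z = (s,c)" "s \<in> insert a S" "c < m" "c \<notin> insert a S" "c < s" by (auto simp: Dset_def)
        have "s \<noteq> a" using z amin[of c] by auto
        then show "z \<in> Dset m S" using z unfolding Dset_def by auto
      qed
      have "(b,a) \<notin> Dset m (insert a S)" using ST by (simp add: Dset_def)
      then show "Dset m (insert a S) \<noteq> Dset m S" using baD by blast
    qed
    have D3: "Dset m (insert a T) \<subset> Dset m S"
    proof
      show "Dset m (insert a T) \<subseteq> Dset m S"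
      proof
        fix z assume "z \<in> Dset m (insert a T)"
        then obtain s c where z: "z = (s,c)" "s \<in> insert a T" "c < m" "c \<notin> insert a T" "c < s" by (auto simp: Dset_def)
        have "s \<noteq> a"
        proof
          assume "s = a"
          then have "c < a" using z by simp
          then have "c \<noteq> b" using ab by simp
          then have "c \<notin> S" using z ST by auto
          then show False using amin[of c] z \<open>c < a\<close> by auto
        qed
        then have "s \<in> T" using z by simp
        then have "c \<noteq> b" using z bmax[of s] unfolding T_def by auto
        then show "z \<in> Dset m S" using z \<open>s \<in> T\<close> unfolding T_def Dset_def by auto
      qed
      have "(b,a) \<notin> Dset m (insert a T)" using ST by (simp add: Dset_def)
      then show "Dset m (insert a T) \<noteq> Dset m S" using baD by blast
    qed
    have Tm: "T \<subseteq> {..<m}" "insert a T \<subseteq> {..<m}" "insert a S \<subseteq> {..<m}" using S aC unfolding T_def by auto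
    have fS: "finite (Dset m S)" using Dset_finite[OF S] .
    have eqT: "\<psi>1 T = \<psi>2 T" using less.hyps[OF psubset_card_mono[OF fS D1] Tm(1)] .
    have eqTa: "\<psi>1 (insert a T) = \<psi>2 (insert a T)" using less.hyps[OF psubset_card_mono[OF fS D3] Tm(2)] .
    have eqSa: "\<psi>1 (insert a S) = \<psi>2 (insert a S)" using less.hyps[OF psubset_card_mono[OF fS D2] Tm(3)] .
    have Sa: "insert a S = insert b (insert a T)" using ST by auto
    have aT: "a \<notin> T" using aC unfolding T_def by auto
    have bTa: "b \<notin> insert a T" using ST ab by auto
    have edges: "bruhat_edge n (\<psi> T) (\<psi> S)" "bruhat_edge n (\<psi> S) (\<psi> (insert a S))"
      "bruhat_edge n (\<psi> T) (\<psi> (insert a T))" "bruhat_edge n (\<psi> (insert a T)) (\<psi> (insert a S))"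
      if c: "cube n m V E \<psi>" for V E \<psi>
    proof -
      show "bruhat_edge n (\<psi> T) (\<psi> S)" using cube_edge[OF c Tm(1) bm ST(2)] ST(1) by simp
      show "bruhat_edge n (\<psi> S) (\<psi> (insert a S))" using cube_edge[OF c S aC] .
      show "bruhat_edge n (\<psi> T) (\<psi> (insert a T))" using cube_edge[OF c Tm(1) aC(1) aT] .
      show "bruhat_edge n (\<psi> (insert a T)) (\<psi> (insert a S))" using cube_edge[OF c Tm(2) bm bTa] Sa by simp
    qed
    have ne: "\<psi> S \<noteq> \<psi> (insert a T)" if c: "cube n m V E \<psi>" for V E \<psi>
    proof
      assume "\<psi> S = \<psi> (insert a T)"
      then have "S = insert a T" using cube_inj[OF c S Tm(2)] by simp
      then show False using aC by auto
    qed
    show ?thesis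
      using square[OF edges(3)[OF c1] edges(4)[OF c1] edges(1)[OF c1] edges(2)[OF c1]
          edges(1)[OF c2, folded eqT eqSa] edges(2)[OF c2, folded eqT eqSa] ne[OF c1]]
        ne[OF c2] eqTa by simp
  qed
qed



lemma chain:
  assumes c: "cube n m V E \<phi>" and x: "\<phi> {} = x" and y: "\<phi> {..<m} = y"
    and p: "bruhat_path n \<gamma> x y" and pin: "path_in \<gamma> V E"
  shows "length \<gamma> = Suc m \<and> (\<exists>\<pi>. bij_betw \<pi> {..<m} {..<m} \<and> (\<forall>i\<le>m. \<phi> (\<pi> ` {..<i}) = \<gamma> ! i))"
proof -
  define L where "L = length \<gamma>"
  have bij: "bij_betw \<phi> (Pow {..<m}) V"
    and iff: "\<forall>A\<in>Pow {..<m}. \<forall>B\<in>Pow {..<m}. (\<phi> A, \<phi> B) \<in> E \<longleftrightarrow> (\<exists>a\<in>{..<m}. a \<notin> A \<and> B = insert a A)"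
    using c unfolding cube_def by auto
  have ne: "\<gamma> \<noteq> []" and hd: "hd \<gamma> = x" and lst: "last \<gamma> = y"
    and edges: "\<And>i. Suc i < L \<Longrightarrow> (\<gamma> ! i, \<gamma> ! Suc i) \<in> E"
    and sub: "set \<gamma> \<subseteq> V"
    using p pin unfolding bruhat_path_def path_in_def L_def by auto
  have L1: "L \<ge> 1" using ne unfolding L_def by (cases \<gamma>) auto
  define B where "B i = inv_into (Pow {..<m}) \<phi> (\<gamma> ! i)" for i
  have BP: "B i \<subseteq> {..<m} \<and> \<phi> (B i) = \<gamma> ! i" if "i < L" for i
  proof -
    have "\<gamma> ! i \<in> V" using sub that unfolding L_def by auto
    then show ?thesis unfolding B_def
      using bij_betw_inv_into_right[OF bij] inv_into_into[of "\<gamma> ! i" \<phi> "Pow {..<m}"] bij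
      by (auto simp: bij_betw_def)
  qed
  have B0: "B 0 = {}"
  proof -
    have "\<phi> (B 0) = \<phi> {}" using BP[of 0] L1 hd ne x by (simp add: hd_conv_nth)
    then show ?thesis using cube_inj[OF c] BP[of 0] L1 by auto
  qed
  have step: "\<exists>a<m. a \<notin> B i \<and> B (Suc i) = insert a (B i)" if "Suc i < L" for i
  proof -
    have "(\<phi> (B i), \<phi> (B (Suc i))) \<in> E" using edges[OF that] BP[of i] BP[of "Suc i"] that by simp
    moreover have "B i \<in> Pow {..<m}" "B (Suc i) \<in> Pow {..<m}" using BP[of i] BP[of "Suc i"] that by auto
    ultimately have "\<exists>a\<in>{..<m}. a \<notin> B i \<and> B (Suc i) = insert a (B i)"
      using iff by blast
    then show ?thesis by auto
  qed
  have card: "card (B i) = i" if "i < L" for i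
    using that
  proof (induction i)
    case 0 then show ?case using B0 by simp
  next
    case (Suc i)
    then obtain a where "a < m" "a \<notin> B i" "B (Suc i) = insert a (B i)" using step by blast
    moreover have "finite (B i)" using BP[of i] Suc.prems finite_subset by auto
    ultimately show ?case using Suc by simp
  qed
  have Blast: "B (L - 1) = {..<m}"
  proof -
    have "\<phi> (B (L - 1)) = \<phi> {..<m}" using BP[of "L - 1"] L1 lst ne y unfolding L_def by (simp add: last_conv_nth)
    then show ?thesis using cube_inj[OF c] BP[of "L - 1"] L1 by auto
  qed
  have Lm: "L = Suc m" using card[of "L - 1"] Blast L1 by simp
  define \<pi> where "\<pi> i = the_elem (B (Suc i) - B i)" for i
  have pp: "\<pi> i < m \<and> \<pi> i \<notin> B i \<and> B (Suc i) = insert (\<pi> i) (B i)" if ii: "i < m" for i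
  proof -
    obtain a where a: "a < m" "a \<notin> B i" "B (Suc i) = insert a (B i)" using step[of i] ii Lm by auto
    then have "B (Suc i) - B i = {a}" by auto
    then have "\<pi> i = a" unfolding \<pi>_def by simp
    then show ?thesis using a by simp
  qed
  have Bim: "B i = \<pi> ` {..<i}" if "i \<le> m" for i
    using that
  proof (induction i)
    case 0 then show ?case using B0 by simp
  next
    case (Suc i)
    then show ?case using pp[of i] by (simp add: lessThan_Suc)
  qed
  have im: "\<pi> ` {..<m} = {..<m}" using Bim[of m] Blast Lm by simp
  have "inj_on \<pi> {..<m}" by (rule eq_card_imp_inj_on) (simp_all add: im)
  then have "bij_betw \<pi> {..<m} {..<m}" using im by (simp add: bij_betw_def)
  moreover have "\<forall>i\<le>m. \<phi> (\<pi> ` {..<i}) = \<gamma> ! i" using Bim BP Lm by (metis le_imp_less_Suc)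
  ultimately show ?thesis using Lm unfolding L_def by blast
qed

lemma hyp_cube:
  assumes "hypercube_from_to n m V E x y"
  obtains \<phi> where "cube n m V E \<phi>" "\<phi> {} = x" "\<phi> {..<m} = y"
proof -
  have "V \<subseteq> Sym n \<and> E \<subseteq> V \<times> V \<and> (\<forall>(w,v)\<in>E. bruhat_edge n w v) \<and>
     (\<exists>\<phi>. bij_betw \<phi> (Pow {..<m}) V \<and>
        (\<forall>A\<in>Pow {..<m}. \<forall>B\<in>Pow {..<m}.
            (\<phi> A, \<phi> B) \<in> E \<longleftrightarrow> (\<exists>a\<in>{..<m}. a \<notin> A \<and> B = insert a A)) \<and>
        \<phi> {} = x \<and> \<phi> {..<m} = y)" using assms unfolding hypercube_from_to_def .
  then show thesis
  proof (elim conjE exE)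
    fix \<phi> assume h: "E \<subseteq> V \<times> V" "\<forall>(w,v)\<in>E. bruhat_edge n w v" "bij_betw \<phi> (Pow {..<m}) V"
      "\<forall>A\<in>Pow {..<m}. \<forall>B\<in>Pow {..<m}. (\<phi> A, \<phi> B) \<in> E \<longleftrightarrow> (\<exists>a\<in>{..<m}. a \<notin> A \<and> B = insert a A)"
      "\<phi> {} = x" "\<phi> {..<m} = y"
    have "cube n m V E \<phi>" unfolding cube_def using h(1-4) by (intro conjI)
    then show thesis using that h(5,6) by blast
  qed
qed

theorem lemma3p3:
  fixes n :: nat and x y :: "nat \<Rightarrow> nat" and \<gamma> :: "(nat \<Rightarrow> nat) list"
  assumes "x \<in> Sym n" and "y \<in> Sym n"
    and "bruhat_path n \<gamma> x y"
    and "hypercube_from_to n m1 V1 E1 x y" and "path_in \<gamma> V1 E1"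
    and "hypercube_from_to n m2 V2 E2 x y" and "path_in \<gamma> V2 E2"
  shows "V1 = V2 \<and> E1 = E2"
proof -
  obtain \<phi>1 where c1: "cube n m1 V1 E1 \<phi>1" "\<phi>1 {} = x" "\<phi>1 {..<m1} = y" using hyp_cube[OF assms(4)] by blast
  obtain \<phi>2 where c2: "cube n m2 V2 E2 \<phi>2" "\<phi>2 {} = x" "\<phi>2 {..<m2} = y" using hyp_cube[OF assms(6)] by blast
  obtain \<pi>1 where p1: "length \<gamma> = Suc m1" "bij_betw \<pi>1 {..<m1} {..<m1}" "\<forall>i\<le>m1. \<phi>1 (\<pi>1 ` {..<i}) = \<gamma> ! i"
    using chain[OF c1 assms(3,5)] by blast
  obtain \<pi>2 where p2: "length \<gamma> = Suc m2" "bij_betw \<pi>2 {..<m2} {..<m2}" "\<forall>i\<le>m2. \<phi>2 (\<pi>2 ` {..<i}) = \<gamma> ! i"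
    using chain[OF c2 assms(3,7)] by blast
  have m: "m2 = m1" using p1(1) p2(1) by simp
  define \<psi>1 where "\<psi>1 = (\<lambda>S. \<phi>1 (\<pi>1 ` S))"
  define \<psi>2 where "\<psi>2 = (\<lambda>S. \<phi>2 (\<pi>2 ` S))"
  have d1: "cube n m1 V1 E1 \<psi>1" unfolding \<psi>1_def by (rule remap[OF c1(1) p1(2)])
  have d2: "cube n m1 V2 E2 \<psi>2" unfolding \<psi>2_def using remap[OF c2(1) p2(2)] m by simp
  have init: "\<psi>1 {..<k} = \<psi>2 {..<k}" if "k \<le> m1" for k
    using p1(3) p2(3) that m unfolding \<psi>1_def \<psi>2_def by simp
  have eq: "\<psi>1 S = \<psi>2 S" if "S \<subseteq> {..<m1}" for S
    by (rule unique[OF d1 d2 init that])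
  have V1: "V1 = \<psi>1 ` Pow {..<m1}" using d1 unfolding cube_def bij_betw_def by auto
  have V2: "V2 = \<psi>2 ` Pow {..<m1}" using d2 unfolding cube_def bij_betw_def by auto
  have "V1 = V2" unfolding V1 V2 using eq by (intro image_cong) auto
  moreover have "E1 = E2" unfolding E_char[OF d1] E_char[OF d2]
  proof (rule Collect_cong)
    fix z
    show "(\<exists>A B. z = (\<psi>1 A, \<psi>1 B) \<and> A \<subseteq> {..<m1} \<and> B \<subseteq> {..<m1} \<and> (\<exists>a\<in>{..<m1}. a \<notin> A \<and> B = insert a A)) \<longleftrightarrow>
          (\<exists>A B. z = (\<psi>2 A, \<psi>2 B) \<and> A \<subseteq> {..<m1} \<and> B \<subseteq> {..<m1} \<and> (\<exists>a\<in>{..<m1}. a \<notin> A \<and> B = insert a A))"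
    proof
      assume "\<exists>A B. z = (\<psi>1 A, \<psi>1 B) \<and> A \<subseteq> {..<m1} \<and> B \<subseteq> {..<m1} \<and> (\<exists>a\<in>{..<m1}. a \<notin> A \<and> B = insert a A)"
      then obtain A B where AB: "z = (\<psi>1 A, \<psi>1 B)" "A \<subseteq> {..<m1}" "B \<subseteq> {..<m1}" "\<exists>a\<in>{..<m1}. a \<notin> A \<and> B = insert a A" by blast
      then have "z = (\<psi>2 A, \<psi>2 B)" using eq by simp
      then show "\<exists>A B. z = (\<psi>2 A, \<psi>2 B) \<and> A \<subseteq> {..<m1} \<and> B \<subseteq> {..<m1} \<and> (\<exists>a\<in>{..<m1}. a \<notin> A \<and> B = insert a A)"
        using AB(2-4) by blast
    next
      assume "\<exists>A B. z = (\<psi>2 A, \<psi>2 B) \<and> A \<subseteq> {..<m1} \<and> B \<subseteq> {..<m1} \<and> (\<exists>a\<in>{..<m1}. a \<notin> A \<and> B = insert a A)"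
      then obtain A B where AB: "z = (\<psi>2 A, \<psi>2 B)" "A \<subseteq> {..<m1}" "B \<subseteq> {..<m1}" "\<exists>a\<in>{..<m1}. a \<notin> A \<and> B = insert a A" by blast
      then have "z = (\<psi>1 A, \<psi>1 B)" using eq by simp
      then show "\<exists>A B. z = (\<psi>1 A, \<psi>1 B) \<and> A \<subseteq> {..<m1} \<and> B \<subseteq> {..<m1} \<and> (\<exists>a\<in>{..<m1}. a \<notin> A \<and> B = insert a A)"
        using AB(2-4) by blast
    qed
  qed
  ultimately show ?thesis by simp
qed


end
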